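(* Let $\mathbb{X},\mathbb{Y}$ be finite-dimensional real Hilbert spaces, $f:\mathbb{X}\to(-\infty,\infty]$ and $g:\mathbb{Y}\to(-\infty,\infty]$ proper, convex and lower semicontinuous, $K:\mathbb{X}\to\mathbb{Y}$ linear, and $h:\mathbb{X}\to\mathbb{R}$ convex and differentiable with $\bar L$-Lipschitz gradient. Assume (A1) below holds. Let $(\bar x,\bar w,\bar y)\in\mathbf{\Omega}$ and let $\{(z_n,x_n,w_n,y_n,\tau_n)\}$ be generated by the P-GRPDA algorithm described in the context. Then for any $y\in\mathbb{Y}$ there exists a natural number $n_2$ such that for all $n\ge n_2$, $$2\tau_n\mathbb{J}(x_n,w_n,y)+\frac{\psi}{\psi-1}\|\bar x-z_{n+2}\|^2+\frac1\beta\|y-y_n\|^2+\mu'\|x_n-x_{n+1}\|^2\le \frac{\psi}{\psi-1}\|\bar x-z_{n+1}\|^2+\frac1\beta\|y-y_{n-1}\|^2+\mu'\|x_n-x_{n-1}\|^2-\psi\bar\theta_n\|x_n-z_{n+1}\|^2,$$ where $\bar\theta_n=\tau_n/\tau_{n-1}$.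
   Context: $\phi=\frac{1+\sqrt5}{2}$; $K^*$ adjoint of $K$; $g^*$ Fenchel conjugate of $g$; $\operatorname{prox}_{\lambda f}(x)=\arg\min_{u}\{f(u)+\frac{1}{2\lambda}\|u-x\|^2\}$. (A1): the saddle point problem $\min_{x}\max_{y}\mathbb{L}(x,y):=f(x)+h(x)+\langle Kx,y\rangle-g^*(y)$ has a nonempty solution set, and $0\in\operatorname{ri}(K(\operatorname{dom}f)-\operatorname{dom}g)$ (ri = relative interior). (The paper also assumes the proximal maps of $f,g$ are efficiently computable.) $\Phi(x,w):=f(x)+h(x)+g(w)$; $\mathbf{\Omega}:=\{(\bar x,\bar w,\bar y)\in\mathbb{X}\times\mathbb{Y}\times\mathbb{Y}: -K^*\bar y\in\partial f(\bar x)+\nabla h(\bar x),\ \bar y\in\partial g(\bar w),\ K\bar x=\bar w\}$; for the fixed $(\bar x,\bar w,\bar y)\in\mathbf{\Omega}$, $\mathbb{J}(x,w,y):=\Phi(x,w)+\langle y,Kx-w\rangle-\Phi(\bar x,\bar w)$. P-GRPDA: choose $x_0\in\mathbb{X}$, $y_0\in\mathbb{Y}$, set $z_0=x_0$, choose $\beta>0$, $\psi\in(1,\phi]$, $0<2\mu'<\mu<\psi/2$, $\tau_0>0$. For $n=1,2,\dots$: $z_n=\frac{\psi-1}{\psi}x_{n-1}+\frac1\psi z_{n-1}$; $x_n=\operatorname{prox}_{\tau_{n-1}f}\big(z_n-\tau_{n-1}K^*y_{n-1}-\tau_{n-1}\nabla h(x_{n-1})\big)$; $\tau_n=\min\left\{\tau_{n-1},\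 \frac{\mu\|x_n-x_{n-1}\|}{\sqrt\beta\|Kx_n-Kx_{n-1}\|},\ \frac{\mu'\|x_n-x_{n-1}\|}{\|\nabla h(x_n)-\nabla h(x_{n-1})\|}\right\}$, $\sigma_n=\beta\tau_n$; $w_n=\operatorname{prox}_{\frac{1}{\sigma_n}g}\big(\frac{y_{n-1}}{\sigma_n}+Kx_n\big)$; $y_n=y_{n-1}+\sigma_n(Kx_n-w_n)$. Conventions in the $\tau_n$ update: $1/0=\infty$ (a term with zero denominator and nonzero numerator is ignored) and $0/0=\infty$ (so $\tau_n=\tau_{n-1}$ if $x_n=x_{n-1}$). *)

theory Defs
  imports "HOL-Analysis.Analysis"
begin

definition edom :: "('a \<Rightarrow> ereal) \<Rightarrow> 'a set" where
  "edom f = {x. f x < \<infinity>}"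

definition proper_fun :: "('a \<Rightarrow> ereal) \<Rightarrow> bool" where
  "proper_fun f \<longleftrightarrow> (\<forall>x. f x \<noteq> -\<infinity>) \<and> (\<exists>x. f x \<noteq> \<infinity>)"

definition convex_efun :: "('a::real_vector \<Rightarrow> ereal) \<Rightarrow> bool" where
  "convex_efun f \<longleftrightarrow>
     (\<forall>x y t. 0 < t \<and> t < 1 \<longrightarrow>
        f ((1 - t) *\<^sub>R x + t *\<^sub>R y) \<le> ereal (1 - t) * f x + ereal t * f y)"

definition lsc_fun :: "('a::topological_space \<Rightarrow> ereal) \<Rightarrow> bool" where
  "lsc_fun f \<longleftrightarrow> (\<forall>x X. X \<longlonglongrightarrow> x \<longrightarrow> f x \<le> liminf (\<lambda>n. f (X n)))"

definition fconj :: "('a::real_inner \<Rightarrow> ereal) \<Rightarrow> 'a \<Rightarrow> ereal" where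
  "fconj g y = (SUP w. ereal (y \<bullet> w) - g w)"

definition subdiff :: "('a::real_inner \<Rightarrow> ereal) \<Rightarrow> 'a \<Rightarrow> 'a set" where
  "subdiff f x = {s. f x \<noteq> \<infinity> \<and> f x \<noteq> -\<infinity> \<and>
                     (\<forall>u. f x + ereal (s \<bullet> (u - x)) \<le> f u)}"

definition prox :: "real \<Rightarrow> ('a::real_normed_vector \<Rightarrow> ereal) \<Rightarrow> 'a \<Rightarrow> 'a" where
  "prox lam f v = (ARG_MIN (\<lambda>u. f u + ereal ((norm (u - v))\<^sup>2 / (2 * lam))) u. True)"

text \<open>Saddle point of L(x,y) = f x + h x + <Kx,y> - g*(y), with the usual
  conventions L = +inf for x outside dom f, L = -inf for y outside dom g*
  (for x in dom f).  Stated on the domains where L is real.\<close>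
definition saddle_point ::
  "('a::real_inner \<Rightarrow> ereal) \<Rightarrow> ('a \<Rightarrow> real) \<Rightarrow> ('a \<Rightarrow> 'b::real_inner) \<Rightarrow> ('b \<Rightarrow> ereal)
     \<Rightarrow> 'a \<Rightarrow> 'b \<Rightarrow> bool" where
  "saddle_point f h K g xs ys \<longleftrightarrow>
     xs \<in> edom f \<and> ys \<in> edom (fconj g) \<and>
     (\<forall>x\<in>edom f. \<forall>y\<in>edom (fconj g).
        f xs + ereal (h xs + K xs \<bullet> y) - fconj g y
          \<le> f xs + ereal (h xs + K xs \<bullet> ys) - fconj g ys \<and>
        f xs + ereal (h xs + K xs \<bullet> ys) - fconj g ys
          \<le> f x + ereal (h x + K x \<bullet> ys) - fconj g ys)"

definition A1 ::
  "('a::euclidean_space \<Rightarrow> ereal) \<Rightarrow> ('a \<Rightarrow> real) \<Rightarrow> ('a \<Rightarrow> 'b::euclidean_space) \<Rightarrow> ('b \<Rightarrow> ereal) \<Rightarrow> bool" where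
  "A1 f h K g \<longleftrightarrow>
     (\<exists>xs ys. saddle_point f h K g xs ys) \<and>
     0 \<in> rel_interior {K u - v | u v. u \<in> edom f \<and> v \<in> edom g}"

definition Omega ::
  "('a::euclidean_space \<Rightarrow> ereal) \<Rightarrow> ('a \<Rightarrow> 'a) \<Rightarrow> ('a \<Rightarrow> 'b::euclidean_space) \<Rightarrow> ('b \<Rightarrow> ereal)
     \<Rightarrow> ('a \<times> 'b \<times> 'b) set" where
  "Omega f gradh K g = {(xb, wb, yb).
      (\<exists>s\<in>subdiff f xb. - adjoint K yb = s + gradh xb) \<and> yb \<in> subdiff g wb \<and> K xb = wb}"

definition Phi :: "('a \<Rightarrow> ereal) \<Rightarrow> ('a \<Rightarrow> real) \<Rightarrow> ('b \<Rightarrow> ereal) \<Rightarrow> 'a \<Rightarrow> 'b \<Rightarrow> ereal" where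
  "Phi f h g x w = f x + ereal (h x) + g w"

definition JJ ::
  "('a \<Rightarrow> ereal) \<Rightarrow> ('a \<Rightarrow> real) \<Rightarrow> ('a \<Rightarrow> 'b::real_inner) \<Rightarrow> ('b \<Rightarrow> ereal)
     \<Rightarrow> 'a \<Rightarrow> 'b \<Rightarrow> 'a \<Rightarrow> 'b \<Rightarrow> 'b \<Rightarrow> ereal" where
  "JJ f h K g xb wb x w y = Phi f h g x w + ereal (y \<bullet> (K x - w)) - Phi f h g xb wb"

text \<open>Step-size rule with conventions 1/0 = inf, 0/0 = inf (terms with zero
  denominator are ignored).\<close>
definition step_ratio :: "real \<Rightarrow> real \<Rightarrow> real \<Rightarrow> real" where
  "step_ratio a b dflt = (if b = 0 then dflt else a / b)"

definition pgrpda_tau ::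
  "real \<Rightarrow> real \<Rightarrow> real \<Rightarrow> ('a::real_normed_vector \<Rightarrow> 'b::real_normed_vector) \<Rightarrow> ('a \<Rightarrow> 'a)
     \<Rightarrow> real \<Rightarrow> 'a \<Rightarrow> 'a \<Rightarrow> real" where
  "pgrpda_tau \<beta> \<mu> \<mu>' K gradh tprev xn xp =
     min tprev
       (min (step_ratio (\<mu> * norm (xn - xp)) (sqrt \<beta> * norm (K xn - K xp)) tprev)
            (step_ratio (\<mu>' * norm (xn - xp)) (norm (gradh xn - gradh xp)) tprev))"

definition pgrpda ::
  "('a::euclidean_space \<Rightarrow> ereal) \<Rightarrow> ('a \<Rightarrow> 'a) \<Rightarrow> ('a \<Rightarrow> 'b::euclidean_space) \<Rightarrow> ('b \<Rightarrow> ereal)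
   \<Rightarrow> real \<Rightarrow> real \<Rightarrow> real \<Rightarrow> real \<Rightarrow> real
   \<Rightarrow> (nat \<Rightarrow> 'a) \<Rightarrow> (nat \<Rightarrow> 'a) \<Rightarrow> (nat \<Rightarrow> 'b) \<Rightarrow> (nat \<Rightarrow> 'b) \<Rightarrow> (nat \<Rightarrow> real) \<Rightarrow> (nat \<Rightarrow> real)
   \<Rightarrow> bool" where
  "pgrpda f gradh K g \<beta> \<psi> \<mu> \<mu>' \<tau>0 z x w y \<tau> \<sigma> \<longleftrightarrow>
     z 0 = x 0 \<and> \<tau> 0 = \<tau>0 \<and>
     (\<forall>n\<ge>1.
        z n = ((\<psi> - 1) / \<psi>) *\<^sub>R x (n - 1) + (1 / \<psi>) *\<^sub>R z (n - 1) \<and>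
        x n = prox (\<tau> (n - 1)) f
                (z n - \<tau> (n - 1) *\<^sub>R adjoint K (y (n - 1)) - \<tau> (n - 1) *\<^sub>R gradh (x (n - 1))) \<and>
        \<tau> n = pgrpda_tau \<beta> \<mu> \<mu>' K gradh (\<tau> (n - 1)) (x n) (x (n - 1)) \<and>
        \<sigma> n = \<beta> * \<tau> n \<and>
        w n = prox (1 / \<sigma> n) g ((1 / \<sigma> n) *\<^sub>R y (n - 1) + K (x n)) \<and>
        y n = y (n - 1) + \<sigma> n *\<^sub>R (K (x n) - w n))"

end

theory Submission
  imports Defs
begin

lemma lsc_bdd_below:
  fixes f :: "'a::real_normed_vector \<Rightarrow> ereal"
  assumes ninf: "\<forall>x. f x \<noteq> -\<infinity>" and lsc: "lsc_fun f" and S: "compact S"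
  shows "\<exists>B::real. \<forall>u\<in>S. ereal B \<le> f u"
proof (rule ccontr)
  assume "\<not> ?thesis"
  then have "\<forall>k::nat. \<exists>u\<in>S. f u < ereal (- real k)" by (meson not_le)
  then obtain u where u: "\<And>k. u k \<in> S" "\<And>k. f (u k) < ereal (- real k)" by metis
  from compact_imp_seq_compact[OF S] u(1) obtain l r where lr: "l \<in> S" "strict_mono r" "(u \<circ> r) \<longlonglongrightarrow> l"
    unfolding seq_compact_def by metis
  then have fl: "f l \<le> liminf (\<lambda>n. f ((u\<circ>r) n))" using lsc unfolding lsc_fun_def by blast
  have "liminf (\<lambda>n. f ((u \<circ> r) n)) \<le> ereal (- real k)" for k
  proof -
    have "eventually (\<lambda>n. f ((u\<circ>r) n) \<le> ereal (-real k)) sequentially"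
      unfolding eventually_sequentially
    proof (intro exI allI impI)
      fix n assume "k \<le> n"
      moreover have "n \<le> r n" using seq_suble[OF lr(2)] by simp
      ultimately have "ereal (- real (r n)) \<le> ereal (- real k)" by simp
      then show "f ((u\<circ>r) n) \<le> ereal (-real k)" using u(2)[of "r n"]
        by (simp, meson less_imp_le order_trans)
    qed
    then have "liminf (\<lambda>n. f ((u\<circ>r) n)) \<le> liminf (\<lambda>n. ereal (-real k))" by (rule Liminf_mono)
    also have "\<dots> = ereal (-real k)" by (simp add: Liminf_const)
    finally show ?thesis .
  qed
  with fl have fk: "f l \<le> ereal (- real k)" for k using order_trans by blast
  show False
  proof (cases "f l")
    case (real a)
    have "f l \<le> ereal (- real (nat \<lceil>-a\<rceil> + 1))" by (rule fk)
    then show False using real by simp linarith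
  next
    case PInf then show False using fk[of 0] by simp
  next
    case MInf then show False using ninf by simp
  qed
qed

lemma affine_lower:
  fixes f :: "'a::euclidean_space \<Rightarrow> ereal"
  assumes p: "proper_fun f" and cv: "convex_efun f" and lsc: "lsc_fun f"
  shows "\<exists>a c. \<forall>u. ereal (a - c * norm u) \<le> f u"
proof -
  obtain x0 where x0: "f x0 \<noteq> \<infinity>" using p unfolding proper_fun_def by blast
  have ninf: "\<forall>x. f x \<noteq> -\<infinity>" using p unfolding proper_fun_def by blast
  then obtain f0 where f0: "f x0 = ereal f0" using x0 by (cases "f x0") auto
  obtain B1 where B1: "\<forall>u\<in>cball x0 1. ereal B1 \<le> f u"
    using lsc_bdd_below[OF ninf lsc compact_cball] by blast
  define c where "c = max 0 (f0 - B1)"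
  have c0: "c \<ge> 0" unfolding c_def by simp
  have key: "ereal (f0 - c - c * norm (u - x0)) \<le> f u" for u
  proof (cases "norm (u - x0) \<le> 1")
    case True
    then have "ereal B1 \<le> f u" using B1 by (simp add: dist_norm norm_minus_commute)
    moreover have "f0 - c - c * norm (u - x0) \<le> B1" using c0 unfolding c_def
      by (smt (verit, best) mult_nonneg_nonneg norm_ge_zero)
    ultimately show ?thesis using order_trans ereal_less_eq(3) by blast
  next
    case False
    define d where "d = norm (u - x0)"
    have d1: "d > 1" using False d_def by simp
    define t where "t = 1 / d"
    have t: "0 < t" "t < 1" using d1 unfolding t_def by auto
    define p where "p = (1 - t) *\<^sub>R x0 + t *\<^sub>R u"
    have "p - x0 = t *\<^sub>R (u - x0)" unfolding p_def by (simp add: algebra_simps)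
    then have "norm (p - x0) = 1" using d1 unfolding t_def d_def by (auto simp: norm_minus_commute)
    then have "ereal B1 \<le> f p" using B1 by (simp add: dist_norm norm_minus_commute)
    also have "f p \<le> ereal (1 - t) * f x0 + ereal t * f u"
      using cv t unfolding convex_efun_def p_def by blast
    finally have ineq: "ereal B1 \<le> ereal (1 - t) * f x0 + ereal t * f u" .
    show ?thesis
    proof (cases "f u")
      case (real fu)
      with ineq f0 have "B1 \<le> (1 - t) * f0 + t * fu" by simp
      then have "d * B1 \<le> d * ((1 - t) * f0 + t * fu)" using d1 by (simp add: mult_left_mono)
      also have "\<dots> = (d - 1) * f0 + fu" using d1 unfolding t_def by (simp add: field_simps)
      finally have "fu \<ge> f0 - d * (f0 - B1)" by (simp add: algebra_simps)
      moreover have "d * (f0 - B1) \<le> d * c" using d1 unfolding c_def by (simp add: mult_left_mono)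
      ultimately have "f0 - c - c * d \<le> fu" using c0 by (simp add: mult.commute)
      then show ?thesis using real d_def by simp
    next
      case PInf then show ?thesis by simp
    next
      case MInf then show ?thesis using ninf by simp
    qed
  qed
  show ?thesis
  proof (intro exI allI)
    fix u
    have "norm (u - x0) \<le> norm u + norm x0" by (rule norm_triangle_ineq4)
    then have "c * norm (u - x0) \<le> c * (norm u + norm x0)" using c0 by (simp add: mult_left_mono)
    then have "f0 - c - c * norm x0 - c * norm u \<le> f0 - c - c * norm (u - x0)" by (simp add: algebra_simps)
    then show "ereal ((f0 - c - c * norm x0) - c * norm u) \<le> f u" using key[of u]
      by (metis diff_diff_eq order_trans ereal_less_eq(3))
  qed
qed

lemma coercive_bound:
  fixes a c M lam nv :: real
  assumes "c \<ge> 0" "lam > 0" "nv \<ge> 0"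
  shows "\<exists>R. \<forall>r nd. r > R \<longrightarrow> nd \<ge> r - nv \<longrightarrow> a - c * r + nd\<^sup>2 / (2 * lam) > M"
proof -
  define D where "D = \<bar>M - a\<bar> + c * nv + 1"
  have D: "D \<ge> 1" unfolding D_def using assms by simp
  show ?thesis
  proof (intro exI allI impI)
    fix r nd assume r: "r > nv + 2 * lam * (c + D) + 1" and nd: "nd \<ge> r - nv"
    define s where "s = r - nv"
    have "2 * lam * (c + D) \<ge> 0" using assms D by simp
    then have s1: "s \<ge> 1" "s \<ge> 2 * lam * (c + D)" using r unfolding s_def by linarith+
    have "s * s \<le> nd * nd" using nd s1 unfolding s_def by (intro mult_mono) auto
    then have q: "s\<^sup>2 / (2 * lam) \<le> nd\<^sup>2 / (2*lam)" using assms by (simp add: power2_eq_square divide_right_mono)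
    have "s * (2 * lam * (c + D)) \<le> s * s" using s1 by (intro mult_left_mono) auto
    then have "s * (c + D) \<le> s\<^sup>2 / (2 * lam)" using assms by (simp add: field_simps power2_eq_square)
    moreover have "s * D \<ge> D" using s1 D by (simp add: mult_le_cancel_right1)
    ultimately have "a - c * r + s\<^sup>2 / (2 * lam) \<ge> a - c * nv + D"
      unfolding s_def by (simp add: algebra_simps)
    then show "a - c * r + nd\<^sup>2 / (2 * lam) > M" using q unfolding D_def by linarith
  qed
qed

lemma prox_exists:
  fixes f :: "'a::euclidean_space \<Rightarrow> ereal"
  assumes p: "proper_fun f" and cv: "convex_efun f" and lsc: "lsc_fun f" and lam: "lam > 0"
  shows "\<exists>xs. \<forall>u. f xs + ereal ((norm (xs - v))\<^sup>2 / (2 * lam)) \<le> f u + ereal ((norm (u - v))\<^sup>2 / (2 * lam))"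
proof -
  define q where "q u = (norm (u - v))\<^sup>2 / (2 * lam)" for u
  have q0: "q u \<ge> 0" for u unfolding q_def using lam by simp
  define \<phi> where "\<phi> u = f u + ereal (q u)" for u
  have ninf: "\<forall>x. f x \<noteq> -\<infinity>" using p unfolding proper_fun_def by blast
  obtain a c0 where ac: "\<forall>u. ereal (a - c0 * norm u) \<le> f u" using affine_lower[OF p cv lsc] by blast
  define c where "c = max c0 0"
  have c: "c \<ge> 0" "\<And>u. ereal (a - c * norm u) \<le> f u"
  proof -
    show "c \<ge> 0" unfolding c_def by simp
    fix u :: 'a
    have "a - c * norm u \<le> a - c0 * norm u" unfolding c_def by (simp add: mult_right_mono)
    then show "ereal (a - c * norm u) \<le> f u" using ac order_trans ereal_less_eq(3) by blast
  qed
  have philow: "ereal (a - c * norm u + q u) \<le> \<phi> u" for u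
    unfolding \<phi>_def using c(2)[of u] by (metis add_right_mono plus_ereal.simps(1))
  obtain x0 where x0: "f x0 \<noteq> \<infinity>" using p unfolding proper_fun_def by blast
  then obtain f0 where f0: "f x0 = ereal f0" using ninf by (cases "f x0") auto
  define M where "M = f0 + q x0"
  have phix0: "\<phi> x0 = ereal M" unfolding \<phi>_def M_def f0 by simp
  obtain R where R: "\<forall>r nd. r > R \<longrightarrow> nd \<ge> r - norm v \<longrightarrow> a - c * r + nd\<^sup>2 / (2 * lam) > M"
    using coercive_bound[OF c(1) lam norm_ge_zero] by blast
  have far: "\<phi> u > ereal M" if "norm u > R" for u
  proof -
    have "norm (u - v) \<ge> norm u - norm v" by (rule norm_triangle_ineq2)
    then have "a - c * norm u + q u > M" using R that unfolding q_def by blast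
    then have "ereal M < ereal (a - c * norm u + q u)" by simp
    then show ?thesis using philow[of u] by (rule order_less_le_trans)
  qed
  define KK where "KK = cball (0::'a) R"
  have x0K: "x0 \<in> KK" unfolding KK_def using far[of x0] phix0 by fastforce
  define m where "m = Inf (\<phi> ` KK)"
  have mle: "m \<le> \<phi> u" if "u \<in> KK" for u unfolding m_def using that by (simp add: INF_lower)
  have mM: "m \<le> ereal M" using mle[OF x0K] phix0 by simp
  have mlow: "ereal (a - c * R) \<le> m" unfolding m_def
  proof (rule INF_greatest)
    fix u assume "u \<in> KK"
    then have "norm u \<le> R" unfolding KK_def by simp
    then have "a - c * R \<le> a - c * norm u + q u" using c(1) q0[of u] by (smt (verit) mult_left_mono)
    then show "ereal (a - c * R) \<le> \<phi> u" using philow[of u] order_trans ereal_less_eq(3) by blast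
  qed
  obtain mr where mr: "m = ereal mr" using mM mlow by (cases m) auto
  have "\<forall>k::nat. \<exists>u\<in>KK. \<phi> u < ereal (mr + 1 / (real k + 1))"
  proof
    fix k :: nat
    have "m < ereal (mr + 1 / (real k + 1))" using mr by simp
    then show "\<exists>u\<in>KK. \<phi> u < ereal (mr + 1 / (real k + 1))" unfolding m_def by (simp add: INF_less_iff)
  qed
  then obtain u where u: "\<And>k. u k \<in> KK" "\<And>k. \<phi> (u k) < ereal (mr + 1 / (real k + 1))" by metis
  define F where "F k = real_of_ereal (f (u k))" for k
  have fu: "f (u k) = ereal (F k)" for k
  proof -
    have "f (u k) \<noteq> \<infinity>" using u(2)[of k] unfolding \<phi>_def by auto
    then show ?thesis unfolding F_def using ninf by (cases "f (u k)") auto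
  qed
  have Fu: "F k + q (u k) < mr + 1 / (real k + 1)" for k using u(2)[of k] unfolding \<phi>_def fu by simp
  have cK: "compact KK" unfolding KK_def by simp
  from compact_imp_seq_compact[OF cK] u(1) obtain l r where lr: "l \<in> KK" "strict_mono r" "(u \<circ> r) \<longlonglongrightarrow> l"
    unfolding seq_compact_def by metis
  have fl: "f l \<le> liminf (\<lambda>n. f ((u\<circ>r) n))" using lsc lr(3) unfolding lsc_fun_def by blast
  have qlim: "(\<lambda>n. q ((u\<circ>r) n)) \<longlonglongrightarrow> q l" unfolding q_def
    using lam by (intro tendsto_intros lr(3)) auto
  have eps: "f l \<le> ereal (mr - q l + 2 * e)" if e: "e > 0" for e
  proof -
    have ev1: "eventually (\<lambda>n. q ((u\<circ>r) n) > q l - e) sequentially"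
      using qlim e by (simp add: order_tendstoD(1))
    have "(\<lambda>n. 1 / (real n + 1)) \<longlonglongrightarrow> 0" using LIMSEQ_inverse_real_of_nat by (simp add: inverse_eq_divide add.commute)
    then have ev2: "eventually (\<lambda>n. 1 / (real n + 1) < e) sequentially" using e by (simp add: order_tendstoD(2))
    have "eventually (\<lambda>n. f ((u\<circ>r) n) \<le> ereal (mr - q l + 2 * e)) sequentially"
      using ev1 ev2
    proof eventually_elim
      case (elim n)
      have "n \<le> r n" using seq_suble[OF lr(2)] by simp
      then have "1 / (real (r n) + 1) \<le> 1 / (real n + 1)" by (simp add: frac_le)
      then have "F (r n) \<le> mr - q l + 2 * e" using Fu[of "r n"] elim by simp
      then show ?case using fu by simp
    qed
    then have "liminf (\<lambda>n. f ((u\<circ>r) n)) \<le> liminf (\<lambda>n. ereal (mr - q l + 2 * e))" by (rule Liminf_mono)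
    also have "\<dots> = ereal (mr - q l + 2 * e)" by (simp add: Liminf_const)
    finally show ?thesis using fl by simp
  qed
  have "f l \<noteq> \<infinity>" using eps[of 1] by auto
  then obtain fl where flr: "f l = ereal fl" using ninf by (cases "f l") auto
  have "fl + q l \<le> mr"
  proof (rule field_le_epsilon)
    fix e :: real assume "e > 0"
    then have "fl \<le> mr - q l + 2 * (e/2)" using eps[of "e/2"] flr by simp
    then show "fl + q l \<le> mr + e" by simp
  qed
  then have phil: "\<phi> l \<le> m" unfolding \<phi>_def flr mr by simp
  show ?thesis
  proof (intro exI allI)
    fix w
    have "\<phi> l \<le> \<phi> w"
    proof (cases "w \<in> KK")
      case True then show ?thesis using phil mle by (meson order_trans)
    next
      case False
      then have "\<phi> w > ereal M" using far unfolding KK_def by simp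
      then show ?thesis using phil mM by (meson order_trans less_imp_le)
    qed
    then show "f l + ereal ((norm (l - v))\<^sup>2 / (2 * lam)) \<le> f w + ereal ((norm (w - v))\<^sup>2 / (2 * lam))"
      unfolding \<phi>_def q_def .
  qed
qed

lemma small_t:
  fixes A B :: real
  assumes "B \<ge> 0" "\<And>t. 0 < t \<Longrightarrow> t < 1 \<Longrightarrow> A \<le> t * B"
  shows "A \<le> 0"
proof (rule ccontr)
  assume "\<not> A \<le> 0"
  then have A: "A > 0" by simp
  define t where "t = min (1/2) (A / (2 * B + 1))"
  have t: "0 < t" "t < 1" unfolding t_def using A assms(1) by auto
  have "t * B \<le> (A / (2 * B + 1)) * B" unfolding t_def using assms(1) by (intro mult_right_mono) auto
  also have "\<dots> < A" using A assms(1) by (simp add: field_simps) (metis add_pos_nonneg less_eq_real_def mult_nonneg_nonneg)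
  finally show False using assms(2)[OF t] by simp
qed

lemma norm_add_scale_sq:
  fixes a d :: "'a::real_inner"
  shows "(norm (a + t *\<^sub>R d))\<^sup>2 = (norm a)\<^sup>2 + 2 * t * (a \<bullet> d) + t\<^sup>2 * (norm d)\<^sup>2"
  by (simp only: power2_norm_eq_inner) (simp add: inner_add_left inner_add_right inner_commute algebra_simps power2_eq_square)

lemma prox_char:
  fixes f :: "'a::euclidean_space \<Rightarrow> ereal"
  assumes p: "proper_fun f" and cv: "convex_efun f" and lsc: "lsc_fun f" and lam: "lam > 0"
    and xs: "xs = prox lam f v"
  shows "\<exists>fx. f xs = ereal fx \<and> (\<forall>u. ereal (fx + (v - xs) \<bullet> (u - xs) / lam) \<le> f u)"
proof -
  define q where "q u = (norm (u - v))\<^sup>2 / (2 * lam)" for u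
  have ex: "\<exists>x. is_arg_min (\<lambda>u. f u + ereal (q u)) (\<lambda>u. True) x"
    using prox_exists[OF p cv lsc lam, of v] unfolding is_arg_min_def q_def by (auto simp: not_less)
  have "is_arg_min (\<lambda>u. f u + ereal (q u)) (\<lambda>u. True) xs"
    unfolding xs prox_def arg_min_def q_def using someI_ex[OF ex[unfolded q_def]] by simp
  then have mn: "f xs + ereal (q xs) \<le> f u + ereal (q u)" for u unfolding is_arg_min_def by (auto simp: not_less)
  have ninf: "\<forall>x. f x \<noteq> -\<infinity>" using p unfolding proper_fun_def by blast
  obtain x0 where x0: "f x0 \<noteq> \<infinity>" using p unfolding proper_fun_def by blast
  have "f xs \<noteq> \<infinity>"
  proof
    assume "f xs = \<infinity>"
    then have "f x0 + ereal (q x0) = \<infinity>" using mn[of x0] by simp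
    then show False using x0 ninf by (cases "f x0") auto
  qed
  then obtain fx where fx: "f xs = ereal fx" using ninf by (cases "f xs") auto
  show ?thesis
  proof (intro exI conjI allI)
    show "f xs = ereal fx" by fact
    fix u
    show "ereal (fx + (v - xs) \<bullet> (u - xs) / lam) \<le> f u"
    proof (cases "f u")
      case PInf then show ?thesis by simp
    next
      case MInf then show ?thesis using ninf by simp
    next
      case (real fu)
      have "fx - fu - (xs - v) \<bullet> (u - xs) / lam \<le> 0"
      proof (rule small_t)
        show "(norm (u - xs))\<^sup>2 / (2 * lam) \<ge> 0" using lam by simp
        fix t :: real assume t: "0 < t" "t < 1"
        define ut where "ut = (1 - t) *\<^sub>R xs + t *\<^sub>R u"
        have fut: "f ut \<le> ereal ((1 - t) * fx + t * fu)"
          using cv t unfolding convex_efun_def ut_def using fx real by (metis times_ereal.simps(1) plus_ereal.simps(1))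
        have "ereal (fx + q xs) \<le> f ut + ereal (q ut)" using mn[of ut] fx by simp
        also have "\<dots> \<le> ereal ((1 - t) * fx + t * fu) + ereal (q ut)" using fut by (rule add_right_mono)
        finally have r: "fx + q xs \<le> (1 - t) * fx + t * fu + q ut" by simp
        have utv: "ut - v = (xs - v) + t *\<^sub>R (u - xs)" unfolding ut_def by (simp add: algebra_simps)
        have "q ut = ((norm (xs - v))\<^sup>2 + 2 * t * ((xs - v) \<bullet> (u - xs)) + t\<^sup>2 * (norm (u - xs))\<^sup>2) / (2 * lam)"
          by (simp only: q_def utv norm_add_scale_sq)
        then have "t * fx \<le> t * fu + t * ((xs - v) \<bullet> (u - xs) / lam) + t * (t * ((norm (u - xs))\<^sup>2 / (2 * lam)))"
          using r lam unfolding q_def by (simp add: field_simps power2_eq_square)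
        then have "t * fx \<le> t * (fu + (xs - v) \<bullet> (u - xs) / lam + t * ((norm (u - xs))\<^sup>2 / (2 * lam)))"
          by (simp add: distrib_left)
        then have "fx \<le> fu + (xs - v) \<bullet> (u - xs) / lam + t * ((norm (u - xs))\<^sup>2 / (2 * lam))"
          using t by (meson mult_left_le_imp_le)
        then show "fx - fu - (xs - v) \<bullet> (u - xs) / lam \<le> t * ((norm (u - xs))\<^sup>2 / (2 * lam))" by simp
      qed
      moreover have "(v - xs) \<bullet> (u - xs) = - ((xs - v) \<bullet> (u - xs))" by (simp add: inner_diff_left)
      ultimately show ?thesis using real by simp
    qed
  qed
qed

lemma three_pt:
  fixes a b c :: "'a::real_inner"
  shows "2 * ((a - b) \<bullet> (c - b)) = (norm (a - b))\<^sup>2 + (norm (c - b))\<^sup>2 - (norm (a - c))\<^sup>2"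
  by (simp only: power2_norm_eq_inner) (simp add: inner_diff_left inner_diff_right inner_commute algebra_simps)

lemma amgm2: fixes a b :: real shows "2 * a * b \<le> a\<^sup>2 + b\<^sup>2"
  using sum_squares_bound[of a b] by simp

lemma inner_exp3:
  fixes a b c e d :: "'a::real_inner"
  shows "(a - t *\<^sub>R b - t *\<^sub>R c - e) \<bullet> d = (a - e) \<bullet> d - t * (b \<bullet> d) - t * (c \<bullet> d)"
  by (simp add: inner_diff_left algebra_simps)

lemma norm_comb_sq:
  fixes A B :: "'a::real_inner"
  shows "(norm (a *\<^sub>R A + b *\<^sub>R B))\<^sup>2 = a\<^sup>2 * (A \<bullet> A) + 2 * a * b * (A \<bullet> B) + b\<^sup>2 * (B \<bullet> B)"
  unfolding power2_norm_eq_inner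
  by (simp add: inner_add_left inner_add_right inner_commute power2_eq_square algebra_simps)

lemma golden_real:
  fixes p N B C :: real
  assumes "p \<noteq> 0" "p - 1 \<noteq> 0"
  shows "p * (p - 1) * (p / (p - 1) * N - B / (p - 1) + C / p) = p\<^sup>2 * N - p * B + (p - 1) * C"
proof -
  have "p * (p - 1) * (p / (p - 1) * N) = p\<^sup>2 * N" using assms by (simp add: power2_eq_square)
  moreover have "p * (p - 1) * (B / (p - 1)) = p * B" using assms by simp
  moreover have "p * (p - 1) * (C / p) = (p - 1) * C" using assms by simp
  ultimately show ?thesis by (simp add: algebra_simps)
qed

lemma golden_id:
  fixes xb zn1 zn2 xn1 :: "'a::real_inner"
  assumes psi: "\<psi> > 1" and Z2: "zn2 = ((\<psi> - 1) / \<psi>) *\<^sub>R xn1 + (1 / \<psi>) *\<^sub>R zn1"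
  shows "(norm (xb - xn1))\<^sup>2 = \<psi> / (\<psi> - 1) * (norm (xb - zn2))\<^sup>2 - (norm (xb - zn1))\<^sup>2 / (\<psi> - 1)
            + (norm (xn1 - zn1))\<^sup>2 / \<psi>"
proof -
  have p0: "\<psi> \<noteq> 0" "\<psi> - 1 \<noteq> 0" using psi by auto
  have e: "xb - zn2 = ((\<psi> - 1) / \<psi>) *\<^sub>R (xb - xn1) + (1 / \<psi>) *\<^sub>R (xb - zn1)"
    unfolding Z2 using p0 by (simp add: algebra_simps scaleR_left_distrib[symmetric] diff_divide_distrib)
  have e2: "xn1 - zn1 = (xb - zn1) - (xb - xn1)" by simp
  define A where "A = xb - xn1"
  define B where "B = xb - zn1"
  have h0: "(norm (xb - zn2))\<^sup>2 = ((\<psi> - 1) / \<psi>)\<^sup>2 * (A \<bullet> A) + 2 * ((\<psi> - 1) / \<psi>) * (1 / \<psi>) * (A \<bullet> B) + (1 / \<psi>)\<^sup>2 * (B \<bullet> B)"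
    unfolding e A_def[symmetric] B_def[symmetric] norm_comb_sq by simp
  have h1: "\<psi>\<^sup>2 * (norm (xb - zn2))\<^sup>2 = (\<psi> - 1)\<^sup>2 * (A \<bullet> A) + 2 * (\<psi> - 1) * (A \<bullet> B) + B \<bullet> B"
    unfolding h0 using p0 by (simp add: field_simps power2_eq_square)
  have n1: "(norm (xn1 - zn1))\<^sup>2 = B \<bullet> B - 2 * (A \<bullet> B) + A \<bullet> A"
    unfolding e2 A_def[symmetric] B_def[symmetric] power2_norm_eq_inner
    by (simp add: inner_diff_left inner_diff_right inner_commute)
  have n2: "(norm (xb - xn1))\<^sup>2 = A \<bullet> A" "(norm (xb - zn1))\<^sup>2 = B \<bullet> B"
    unfolding A_def B_def power2_norm_eq_inner by simp_all
  have h2: "\<psi> * (\<psi> - 1) * (\<psi> / (\<psi> - 1) * (norm (xb - zn2))\<^sup>2 - (norm (xb - zn1))\<^sup>2 / (\<psi> - 1)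
            + (norm (xn1 - zn1))\<^sup>2 / \<psi>) = \<psi>\<^sup>2 * (norm (xb - zn2))\<^sup>2 - \<psi> * (norm (xb - zn1))\<^sup>2 + (\<psi> - 1) * (norm (xn1 - zn1))\<^sup>2"
    using p0 by (rule golden_real)
  also have "\<dots> = \<psi> * (\<psi> - 1) * (norm (xb - xn1))\<^sup>2"
    unfolding h1 n1 n2 by (simp add: algebra_simps power2_eq_square)
  finally show ?thesis using p0 by simp
qed

lemma core:
  fixes K :: "'a::euclidean_space \<Rightarrow> 'b::euclidean_space"
    and xb xp xn xn1 zn zn1 zn2 Gn Gp :: 'a and wb wn yp yn yy :: 'b
  assumes K: "linear K"
  and F1: "Fxb \<ge> Fxn1 + (zn1 - tn *\<^sub>R adjoint K yn - tn *\<^sub>R Gn - xn1) \<bullet> (xb - xn1) / tn"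
  and F2: "Fxn1 \<ge> Fxn + (zn - tp *\<^sub>R adjoint K yp - tp *\<^sub>R Gp - xn) \<bullet> (xn1 - xn) / tp"
  and Gw: "Gwb \<ge> Gwn + yn \<bullet> (wb - wn)"
  and H: "Hxb \<ge> Hxn + Gn \<bullet> (xb - xn)"
  and Z1: "zn1 = ((\<psi> - 1) / \<psi>) *\<^sub>R xn + (1 / \<psi>) *\<^sub>R zn"
  and Z2: "zn2 = ((\<psi> - 1) / \<psi>) *\<^sub>R xn1 + (1 / \<psi>) *\<^sub>R zn1"
  and Y: "yn = yp + (\<beta> * tn) *\<^sub>R (K xn - wn)"
  and Kxb: "K xb = wb"
  and tn: "tn > 0" and tp: "tp > 0" "tn \<le> tp" and beta: "\<beta> > 0"
  and psi: "\<psi> > 1" "\<psi>\<^sup>2 \<le> \<psi> + 1"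
  and mu': "\<mu>' \<ge> 0"
  and Gstep: "tn * norm (Gn - Gp) \<le> \<mu>' * norm (xn - xp)"
  and Kstep: "tn * sqrt \<beta> * norm (K xn1 - K xn) \<le> \<kappa> * norm (xn1 - xn)"
  and kap: "\<kappa> \<ge> 0" "\<kappa>\<^sup>2 \<le> \<psi> * (tn / tp) - 2 * \<mu>'"
  shows "2 * tn * (Fxn + Hxn + Gwn + yy \<bullet> (K xn - wn) - Fxb - Hxb - Gwb)
      + (\<psi> / (\<psi> - 1) * (norm (xb - zn2))\<^sup>2 + 1 / \<beta> * (norm (yy - yn))\<^sup>2 + \<mu>' * (norm (xn - xn1))\<^sup>2)
    \<le> \<psi> / (\<psi> - 1) * (norm (xb - zn1))\<^sup>2 + 1 / \<beta> * (norm (yy - yp))\<^sup>2 + \<mu>' * (norm (xn - xp))\<^sup>2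
      - \<psi> * (tn / tp) * (norm (xn - zn1))\<^sup>2"
proof -
  define P where "P = \<psi> * (tn / tp)"
  have "tn / tp \<le> 1" using tn tp by simp
  then have P1: "P \<le> \<psi>" unfolding P_def using psi mult_left_mono[of "tn/tp" 1 \<psi>] by simp
  have p0: "\<psi> \<noteq> 0" by (use psi in auto)
  have adj: "adjoint K u \<bullet> d = u \<bullet> K d" for u d by (simp add: adjoint_works[OF K] inner_commute)
  define A where "A = (zn1 - xn1) \<bullet> (xb - xn1)"
  define Bq where "Bq = (zn1 - xn) \<bullet> (xn1 - xn)"
  define ky1 where "ky1 = yn \<bullet> (K xb - K xn1)"
  define ky2 where "ky2 = yp \<bullet> (K xn1 - K xn)"
  define g1 where "g1 = Gn \<bullet> (xb - xn1)"
  define g2 where "g2 = Gp \<bullet> (xn1 - xn)"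
  define g0 where "g0 = Gn \<bullet> (xb - xn)"
  have F1': "tn * Fxb \<ge> tn * Fxn1 + A - tn * ky1 - tn * g1"
  proof -
    have "(zn1 - tn *\<^sub>R adjoint K yn - tn *\<^sub>R Gn - xn1) \<bullet> (xb - xn1) = A - tn * ky1 - tn * g1"
      unfolding inner_exp3 A_def ky1_def g1_def adj by (simp add: linear_diff[OF K])
    then have "tn * Fxb \<ge> tn * (Fxn1 + (A - tn * ky1 - tn * g1) / tn)" using F1 tn by simp
    then show ?thesis using tn by (simp add: distrib_left)
  qed
  have zz: "zn - xn = \<psi> *\<^sub>R (zn1 - xn)"
  proof -
    have "\<psi> *\<^sub>R zn1 = (\<psi> - 1) *\<^sub>R xn + zn" unfolding Z1 using p0 by (simp add: scaleR_add_right)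
    then show ?thesis by (simp add: algebra_simps)
  qed
  have F2': "tn * Fxn1 \<ge> tn * Fxn + P * Bq - tn * ky2 - tn * g2"
  proof -
    have "(zn - tp *\<^sub>R adjoint K yp - tp *\<^sub>R Gp - xn) \<bullet> (xn1 - xn) = \<psi> * Bq - tp * ky2 - tp * g2"
      unfolding inner_exp3 zz Bq_def ky2_def g2_def adj by (simp add: linear_diff[OF K])
    then have "tn * Fxn1 \<ge> tn * (Fxn + (\<psi> * Bq - tp * ky2 - tp * g2) / tp)" using F2 tn by simp
    also have "tn * (Fxn + (\<psi> * Bq - tp * ky2 - tp * g2) / tp) = tn * Fxn + P * Bq - tn * ky2 - tn * g2"
      unfolding P_def using tp by (simp add: field_simps)
    finally show ?thesis .
  qed
  have Kw: "K xn - wn = (1 / (\<beta> * tn)) *\<^sub>R (yn - yp)" using Y tn beta by simp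
  define yv where "yv = (yy - yn) \<bullet> (yn - yp)"
  define c where "c = (yn - yp) \<bullet> (K xn - K xn1)"
  have lin: "tn * (ky1 + ky2 + yn \<bullet> (wn - wb) + yy \<bullet> (K xn - wn)) = tn * c + yv / \<beta>"
  proof -
    have "ky1 + ky2 + yn \<bullet> (wn - wb) + yy \<bullet> (K xn - wn) = c + (yy - yn) \<bullet> (K xn - wn)"
      unfolding ky1_def ky2_def c_def Kxb by (simp add: inner_diff_left inner_diff_right)
    also have "(yy - yn) \<bullet> (K xn - wn) = yv / (\<beta> * tn)" unfolding Kw yv_def by simp
    finally show ?thesis using tn beta by (simp add: field_simps)
  qed
  have gsum: "g1 + g2 - g0 = - ((Gn - Gp) \<bullet> (xn1 - xn))"
    unfolding g1_def g2_def g0_def by (simp add: inner_diff_left inner_diff_right)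
  have B1: "- tn * ((Gn - Gp) \<bullet> (xn1 - xn)) \<le> \<mu>' / 2 * ((norm (xn - xp))\<^sup>2 + (norm (xn1 - xn))\<^sup>2)"
  proof -
    have "- tn * ((Gn - Gp) \<bullet> (xn1 - xn)) \<le> tn * (norm (Gn - Gp) * norm (xn1 - xn))"
      using tn Cauchy_Schwarz_ineq2[of "Gn - Gp" "xn1 - xn"]
      by (simp add: abs_le_iff) (metis minus_mult_right mult_left_mono less_imp_le)
    also have "\<dots> = (tn * norm (Gn - Gp)) * norm (xn1 - xn)" by simp
    also have "\<dots> \<le> (\<mu>' * norm (xn - xp)) * norm (xn1 - xn)" using Gstep by (simp add: mult_right_mono)
    also have "\<dots> = \<mu>' / 2 * (2 * norm (xn - xp) * norm (xn1 - xn))" by simp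
    also have "\<dots> \<le> \<mu>' / 2 * ((norm (xn - xp))\<^sup>2 + (norm (xn1 - xn))\<^sup>2)"
      using mu' amgm2[of "norm (xn - xp)" "norm (xn1 - xn)"] by (intro mult_left_mono) auto
    finally show ?thesis .
  qed
  have B2: "2 * tn * c \<le> 1 / \<beta> * (norm (yn - yp))\<^sup>2 + \<kappa>\<^sup>2 * (norm (xn1 - xn))\<^sup>2"
  proof -
    define sb where "sb = sqrt \<beta>"
    have sb: "sb > 0" "sb\<^sup>2 = \<beta>" unfolding sb_def using beta by auto
    have "c \<le> norm (yn - yp) * norm (K xn1 - K xn)"
      unfolding c_def using Cauchy_Schwarz_ineq2[of "yn - yp" "K xn - K xn1"] by (simp add: abs_le_iff norm_minus_commute)
    then have s1: "2 * tn * c \<le> 2 * norm (yn - yp) * (tn * norm (K xn1 - K xn))" using tn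
      by (simp add: mult_left_mono)
    have s2: "tn * norm (K xn1 - K xn) \<le> \<kappa> * norm (xn1 - xn) / sb"
      using Kstep sb unfolding sb_def by (simp add: le_divide_eq mult.commute mult.left_commute)
    have s3: "2 * norm (yn - yp) * (tn * norm (K xn1 - K xn)) \<le> 2 * norm (yn - yp) * (\<kappa> * norm (xn1 - xn) / sb)"
      using s2 by (intro mult_left_mono) auto
    have s4: "2 * norm (yn - yp) * (\<kappa> * norm (xn1 - xn) / sb) = 2 * (norm (yn - yp) / sb) * (\<kappa> * norm (xn1 - xn))" by simp
    have s5: "2 * (norm (yn - yp) / sb) * (\<kappa> * norm (xn1 - xn)) \<le> (norm (yn - yp) / sb)\<^sup>2 + (\<kappa> * norm (xn1 - xn))\<^sup>2" by (rule amgm2)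
    have s6: "(norm (yn - yp) / sb)\<^sup>2 + (\<kappa> * norm (xn1 - xn))\<^sup>2 = 1 / \<beta> * (norm (yn - yp))\<^sup>2 + \<kappa>\<^sup>2 * (norm (xn1 - xn))\<^sup>2"
      using sb by (simp add: power_divide power_mult_distrib)
    show ?thesis using s1 s3 s4 s5 s6 by linarith

  qed
  have I1: "2 * A = (norm (zn1 - xn1))\<^sup>2 + (norm (xb - xn1))\<^sup>2 - (norm (zn1 - xb))\<^sup>2"
    unfolding A_def by (rule three_pt)
  have I2: "2 * Bq = (norm (zn1 - xn))\<^sup>2 + (norm (xn1 - xn))\<^sup>2 - (norm (zn1 - xn1))\<^sup>2"
    unfolding Bq_def by (rule three_pt)
  have I3: "(norm (xb - xn1))\<^sup>2 = \<psi> / (\<psi> - 1) * (norm (xb - zn2))\<^sup>2 - (norm (xb - zn1))\<^sup>2 / (\<psi> - 1)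
            + (norm (xn1 - zn1))\<^sup>2 / \<psi>" by (rule golden_id[OF psi(1) Z2])
  have I4: "2 * yv = (norm (yy - yp))\<^sup>2 - (norm (yy - yn))\<^sup>2 - (norm (yn - yp))\<^sup>2"
  proof -
    have "2 * ((yy - yn) \<bullet> (yp - yn)) = (norm (yy - yn))\<^sup>2 + (norm (yp - yn))\<^sup>2 - (norm (yy - yp))\<^sup>2" by (rule three_pt)
    moreover have "(yy - yn) \<bullet> (yp - yn) = - yv" unfolding yv_def by (simp add: inner_diff_right)
    moreover have "norm (yp - yn) = norm (yn - yp)" by (rule norm_minus_commute)
    ultimately show ?thesis by simp
  qed
  have B3: "(1 + 1 / \<psi> - P) * (norm (zn1 - xn1))\<^sup>2 \<ge> 0"
  proof -
    have "\<psi> \<le> 1 + 1 / \<psi>" using psi p0 by (simp add: field_simps power2_eq_square)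
    then show ?thesis using P1 by simp
  qed
  have nc: "norm (zn1 - xb) = norm (xb - zn1)" "norm (xn1 - zn1) = norm (zn1 - xn1)"
    "norm (xn - zn1) = norm (zn1 - xn)" "norm (xn - xn1) = norm (xn1 - xn)"
    by (simp_all add: norm_minus_commute)
  have e3: "\<psi> / (\<psi> - 1) * (norm (xb - zn1))\<^sup>2 = (norm (xb - zn1))\<^sup>2 / (\<psi> - 1) + (norm (xb - zn1))\<^sup>2"
    using psi by (simp add: field_simps)
  have yb: "1 / \<beta> * (norm (yy - yp))\<^sup>2 - 1 / \<beta> * (norm (yy - yn))\<^sup>2 - 1 / \<beta> * (norm (yn - yp))\<^sup>2 = 2 * yv / \<beta>"
    unfolding I4 by (simp add: diff_divide_distrib)
  have B3': "(norm (zn1 - xn1))\<^sup>2 + (norm (zn1 - xn1))\<^sup>2 / \<psi> - P * (norm (zn1 - xn1))\<^sup>2 \<ge> 0"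
    using B3 by (simp add: algebra_simps)
  have Bq': "2 * (P * Bq) = P * (norm (zn1 - xn))\<^sup>2 + P * (norm (xn1 - xn))\<^sup>2 - P * (norm (zn1 - xn1))\<^sup>2"
    using I2 by (metis (no_types, lifting) mult.left_commute right_diff_distrib distrib_left)
  have kap': "\<kappa>\<^sup>2 * (norm (xn1 - xn))\<^sup>2 \<le> P * (norm (xn1 - xn))\<^sup>2 - 2 * \<mu>' * (norm (xn1 - xn))\<^sup>2"
  proof -
    have "\<kappa>\<^sup>2 * (norm (xn1 - xn))\<^sup>2 \<le> (P - 2 * \<mu>') * (norm (xn1 - xn))\<^sup>2"
      using kap(2) unfolding P_def by (intro mult_right_mono) auto
    then show ?thesis by (simp add: left_diff_distrib)
  qed
  have Hm: "tn * Hxb \<ge> tn * Hxn + tn * g0" using H tn unfolding g0_def by (simp add: distrib_left[symmetric])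
  have Gm: "tn * Gwb \<ge> tn * Gwn + tn * (yn \<bullet> (wb - wn))" using Gw tn by (simp add: distrib_left[symmetric])
  have wn: "yn \<bullet> (wn - wb) = - (yn \<bullet> (wb - wn))" by (simp add: inner_diff_right)
  have lin': "tn * ky1 + tn * ky2 - tn * (yn \<bullet> (wb - wn)) + tn * (yy \<bullet> (K xn - wn)) = tn * c + yv / \<beta>"
    using lin wn by (simp add: algebra_simps)
  have gs': "tn * g1 + tn * g2 - tn * g0 = - tn * ((Gn - Gp) \<bullet> (xn1 - xn))"
    using gsum by (metis (no_types, opaque_lifting) mult_minus_right mult.assoc right_diff_distrib distrib_left minus_mult_left)
  define J where "J = Fxn + Hxn + Gwn + yy \<bullet> (K xn - wn) - Fxb - Hxb - Gwb"
  have Jt: "tn * J = (tn * Fxn - tn * Fxb) + (tn * Hxn - tn * Hxb) + (tn * Gwn - tn * Gwb) + tn * (yy \<bullet> (K xn - wn))"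
    unfolding J_def by (simp add: algebra_simps)
  define a1 where "a1 = (norm (zn1 - xn1))\<^sup>2"
  define a2 where "a2 = (norm (xb - xn1))\<^sup>2"
  define a3 where "a3 = (norm (xb - zn1))\<^sup>2"
  define a4 where "a4 = (norm (zn1 - xn))\<^sup>2"
  define a5 where "a5 = (norm (xn1 - xn))\<^sup>2"
  define a6 where "a6 = (norm (xb - zn2))\<^sup>2"
  define ap where "ap = (norm (xn - xp))\<^sup>2"
  define ny1 where "ny1 = (norm (yy - yp))\<^sup>2"
  define ny2 where "ny2 = (norm (yy - yn))\<^sup>2"
  define ny3 where "ny3 = (norm (yn - yp))\<^sup>2"
  have T1: "tn * J \<le> - A - P * Bq + tn * c + yv / \<beta> + \<mu>' / 2 * (ap + a5)"
    using F1' F2' Hm Gm lin' gs' B1 Jt unfolding ap_def a5_def by linarith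
  have I1': "2 * A = a1 + a2 - a3" using I1 nc unfolding a1_def a2_def a3_def by simp
  have Bq'': "2 * (P * Bq) = P * a4 + P * a5 - P * a1" using Bq' unfolding a1_def a4_def a5_def .
  have I3': "a2 = \<psi> / (\<psi> - 1) * a6 - a3 / (\<psi> - 1) + a1 / \<psi>" using I3 nc unfolding a1_def a2_def a3_def a6_def by simp
  have e3': "\<psi> / (\<psi> - 1) * a3 = a3 / (\<psi> - 1) + a3" using e3 unfolding a3_def .
  have yb': "1 / \<beta> * ny1 - 1 / \<beta> * ny2 - 1 / \<beta> * ny3 = 2 * yv / \<beta>" using yb unfolding ny1_def ny2_def ny3_def .
  have yv2: "2 * (yv / \<beta>) = 2 * yv / \<beta>" by simp
  have B2': "2 * tn * c \<le> 1 / \<beta> * ny3 + \<kappa>\<^sup>2 * a5" using B2 unfolding ny3_def a5_def .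
  have kap'': "\<kappa>\<^sup>2 * a5 \<le> P * a5 - 2 * \<mu>' * a5" using kap' unfolding a5_def .
  have B3'': "a1 + a1 / \<psi> - P * a1 \<ge> 0" using B3' unfolding a1_def .
  have mu2: "2 * (\<mu>' / 2 * (ap + a5)) = \<mu>' * ap + \<mu>' * a5" by (simp add: algebra_simps)
  have tc: "2 * (tn * c) = 2 * tn * c" "2 * (tn * J) = 2 * tn * J" by simp_all
  have fin: "2 * tn * J + (\<psi> / (\<psi> - 1) * a6 + 1 / \<beta> * ny2 + \<mu>' * a5)
      \<le> \<psi> / (\<psi> - 1) * a3 + 1 / \<beta> * ny1 + \<mu>' * ap - P * a4"
    using T1 I1' Bq'' I3' e3' yb' yv2 B2' kap'' B3'' mu2 tc by linarith
  show ?thesis using fin nc unfolding J_def P_def a1_def a3_def a4_def a5_def a6_def ap_def ny1_def ny2_def by simp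
qed

lemma convex_tangent:
  fixes h :: "'a::real_normed_vector \<Rightarrow> real" and G :: "'a \<Rightarrow> real"
  assumes cv: "convex_on UNIV h" and d: "(h has_derivative G) (at x)" and lG: "linear G"
  shows "h y \<ge> h x + G (y - x)"
proof -
  define \<phi> where "\<phi> t = h (x + t *\<^sub>R (y - x))" for t :: real
  have cphi: "convex_on UNIV \<phi>"
  proof (rule convex_onI)
    fix t a b :: real assume t: "t > 0" "t < 1"
    have "x + ((1 - t) *\<^sub>R a + t *\<^sub>R b) *\<^sub>R (y - x) = (1 - t) *\<^sub>R (x + a *\<^sub>R (y - x)) + t *\<^sub>R (x + b *\<^sub>R (y - x))"
      by (simp add: algebra_simps)
    then show "\<phi> ((1 - t) *\<^sub>R a + t *\<^sub>R b) \<le> (1 - t) * \<phi> a + t * \<phi> b"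
      unfolding \<phi>_def using convex_onD[OF cv, of t] t by simp
  qed simp
  have d1: "((\<lambda>t. x + t *\<^sub>R (y - x)) has_derivative (\<lambda>t. t *\<^sub>R (y - x))) (at 0)"
    by (auto intro!: derivative_eq_intros)
  have d0: "(h has_derivative G) (at (x + 0 *\<^sub>R (y - x)))" using d by simp
  have "(\<phi> has_derivative (\<lambda>t. G (t *\<^sub>R (y - x)))) (at 0)"
    unfolding \<phi>_def using has_derivative_compose[OF d1 d0] by (simp add: o_def)
  moreover have "(\<lambda>t. G (t *\<^sub>R (y - x))) = (*) (G (y - x))"
    using linear_scale[OF lG] by (auto simp: mult.commute)
  ultimately have "(\<phi> has_field_derivative G (y - x)) (at 0)"
    unfolding has_field_derivative_def by simp
  then have "\<phi> 1 - \<phi> 0 \<ge> G (y - x) * (1 - 0)"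
    by (intro convex_on_imp_above_tangent[OF cphi]) auto
  then show ?thesis unfolding \<phi>_def by simp
qed

lemma tau_props:
  fixes K :: "'a::real_normed_vector \<Rightarrow> 'b::real_normed_vector" and gradh :: "'a \<Rightarrow> 'a"
  assumes tS: "t' = pgrpda_tau \<beta> \<mu> \<mu>' K gradh t xn xp" and t: "t > 0"
    and beta: "\<beta> > 0" and mu: "\<mu> > 0" "\<mu>' > 0"
    and C: "C > 0" "\<And>u v. norm (K u - K v) \<le> C * norm (u - v)"
    and L: "L' > 0" "\<And>u v. norm (gradh u - gradh v) \<le> L' * norm (u - v)"
  shows "t' \<le> t" "t' \<ge> min t (min (\<mu> / (sqrt \<beta> * C)) (\<mu>' / L'))"
    "t' * sqrt \<beta> * norm (K xn - K xp) \<le> \<mu> * norm (xn - xp)"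
    "t' * norm (gradh xn - gradh xp) \<le> \<mu>' * norm (xn - xp)"
proof -
  define d where "d = norm (xn - xp)"
  define kd where "kd = norm (K xn - K xp)"
  define gd where "gd = norm (gradh xn - gradh xp)"
  define r1 where "r1 = step_ratio (\<mu> * d) (sqrt \<beta> * kd) t"
  define r2 where "r2 = step_ratio (\<mu>' * d) gd t"
  have tt: "t' = min t (min r1 r2)" unfolding tS pgrpda_tau_def r1_def r2_def d_def kd_def gd_def by simp
  have sb: "sqrt \<beta> > 0" using beta by simp
  have kd: "kd \<le> C * d" "kd \<ge> 0" unfolding kd_def d_def using C by auto
  have gd: "gd \<le> L' * d" "gd \<ge> 0" unfolding gd_def d_def using L by auto
  show "t' \<le> t" using tt by simp
  have r1: "r1 \<ge> min t (\<mu> / (sqrt \<beta> * C))"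
  proof (cases "sqrt \<beta> * kd = 0")
    case True then show ?thesis unfolding r1_def step_ratio_def by simp
  next
    case False
    then have kd0: "kd > 0" using kd by auto
    then have "C * d > 0" using kd by linarith
    then have d0: "d > 0" using C(1) zero_less_mult_pos by blast
    have "\<mu> / (sqrt \<beta> * C) = (\<mu> * d) / (sqrt \<beta> * C * d)" using d0 by simp
    also have "\<dots> \<le> (\<mu> * d) / (sqrt \<beta> * kd)"
      using d0 kd0 sb mu kd C by (intro divide_left_mono) (auto simp: mult.assoc intro!: mult_left_mono)
    finally show ?thesis unfolding r1_def step_ratio_def using False by simp
  qed
  have r2: "r2 \<ge> min t (\<mu>' / L')"
  proof (cases "gd = 0")
    case True then show ?thesis unfolding r2_def step_ratio_def by simp
  next
    case False
    then have gd0: "gd > 0" using gd by auto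
    then have "L' * d > 0" using gd by linarith
    then have d0: "d > 0" using L(1) zero_less_mult_pos by blast
    have "\<mu>' / L' = (\<mu>' * d) / (L' * d)" using d0 by simp
    also have "\<dots> \<le> (\<mu>' * d) / gd"
      using d0 gd0 mu gd L by (intro divide_left_mono) auto
    finally show ?thesis unfolding r2_def step_ratio_def using False by simp
  qed
  show "t' \<ge> min t (min (\<mu> / (sqrt \<beta> * C)) (\<mu>' / L'))" using tt r1 r2 by linarith
  show "t' * sqrt \<beta> * norm (K xn - K xp) \<le> \<mu> * norm (xn - xp)"
  proof (cases "sqrt \<beta> * kd = 0")
    case True then show ?thesis using mu beta unfolding kd_def by (simp add: mult.assoc)
  next
    case False
    then have pos: "sqrt \<beta> * kd > 0" using kd sb by auto
    have "t' \<le> \<mu> * d / (sqrt \<beta> * kd)" using tt False unfolding r1_def step_ratio_def by simp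
    then have "t' * (sqrt \<beta> * kd) \<le> \<mu> * d" using pos by (simp add: le_divide_eq)
    then show ?thesis unfolding kd_def d_def by (simp add: mult.assoc)
  qed
  show "t' * norm (gradh xn - gradh xp) \<le> \<mu>' * norm (xn - xp)"
  proof (cases "gd = 0")
    case True then show ?thesis using mu unfolding gd_def by simp
  next
    case False
    then have pos: "gd > 0" using gd by auto
    have "t' \<le> \<mu>' * d / gd" using tt False unfolding r2_def step_ratio_def by simp
    then have "t' * gd \<le> \<mu>' * d" using pos by (simp add: le_divide_eq)
    then show ?thesis unfolding gd_def d_def .
  qed
qed

theorem lemma3p1:
  fixes f :: "'a::euclidean_space \<Rightarrow> ereal"
    and g :: "'b::euclidean_space \<Rightarrow> ereal"
    and K :: "'a \<Rightarrow> 'b"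
    and h :: "'a \<Rightarrow> real" and gradh :: "'a \<Rightarrow> 'a" and L :: real
    and \<beta> \<psi> \<mu> \<mu>' \<tau>0 :: real
    and z x :: "nat \<Rightarrow> 'a" and w y :: "nat \<Rightarrow> 'b" and \<tau> \<sigma> :: "nat \<Rightarrow> real"
    and xb :: 'a and wb yb :: 'b
  assumes f: "proper_fun f" "convex_efun f" "lsc_fun f"
    and g: "proper_fun g" "convex_efun g" "lsc_fun g"
    and K: "linear K"
    and h: "convex_on UNIV h" "\<And>u. (h has_derivative (\<lambda>d. gradh u \<bullet> d)) (at u)"
      "\<And>u v. norm (gradh u - gradh v) \<le> L * norm (u - v)"
    and A1: "A1 f h K g"
    and par: "\<beta> > 0" "1 < \<psi>" "\<psi> \<le> (1 + sqrt 5) / 2" "0 < 2 * \<mu>'" "2 * \<mu>' < \<mu>" "\<mu> < \<psi> / 2"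
      "\<tau>0 > 0"
    and alg: "pgrpda f gradh K g \<beta> \<psi> \<mu> \<mu>' \<tau>0 z x w y \<tau> \<sigma>"
    and sol: "(xb, wb, yb) \<in> Omega f gradh K g"
  shows "\<forall>yy. \<exists>n2. \<forall>n\<ge>n2.
    ereal (2 * \<tau> n) * JJ f h K g xb wb (x n) (w n) yy
      + ereal (\<psi> / (\<psi> - 1) * (norm (xb - z (n + 2)))\<^sup>2 + 1 / \<beta> * (norm (yy - y n))\<^sup>2
               + \<mu>' * (norm (x n - x (n + 1)))\<^sup>2)
    \<le> ereal (\<psi> / (\<psi> - 1) * (norm (xb - z (n + 1)))\<^sup>2 + 1 / \<beta> * (norm (yy - y (n - 1)))\<^sup>2
               + \<mu>' * (norm (x n - x (n - 1)))\<^sup>2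
               - \<psi> * (\<tau> n / \<tau> (n - 1)) * (norm (x n - z (n + 1)))\<^sup>2)"
proof -
  have alg0: "\<tau> 0 = \<tau>0" using alg unfolding pgrpda_def by blast
  have algS: "z (Suc k) = ((\<psi> - 1) / \<psi>) *\<^sub>R x k + (1 / \<psi>) *\<^sub>R z k \<and>
        x (Suc k) = prox (\<tau> k) f (z (Suc k) - \<tau> k *\<^sub>R adjoint K (y k) - \<tau> k *\<^sub>R gradh (x k)) \<and>
        \<tau> (Suc k) = pgrpda_tau \<beta> \<mu> \<mu>' K gradh (\<tau> k) (x (Suc k)) (x k) \<and>
        \<sigma> (Suc k) = \<beta> * \<tau> (Suc k) \<and>
        w (Suc k) = prox (1 / \<sigma> (Suc k)) g ((1 / \<sigma> (Suc k)) *\<^sub>R y k + K (x (Suc k))) \<and>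
        y (Suc k) = y k + \<sigma> (Suc k) *\<^sub>R (K (x (Suc k)) - w (Suc k))" for k
    using alg unfolding pgrpda_def by (metis diff_Suc_1 le_add1 plus_1_eq_Suc)
  have zS: "\<And>k. z (Suc k) = ((\<psi> - 1) / \<psi>) *\<^sub>R x k + (1 / \<psi>) *\<^sub>R z k" using algS by blast
  have xS: "\<And>k. x (Suc k) = prox (\<tau> k) f (z (Suc k) - \<tau> k *\<^sub>R adjoint K (y k) - \<tau> k *\<^sub>R gradh (x k))" using algS by blast
  have tS: "\<And>k. \<tau> (Suc k) = pgrpda_tau \<beta> \<mu> \<mu>' K gradh (\<tau> k) (x (Suc k)) (x k)" using algS by blast
  have sS: "\<And>k. \<sigma> (Suc k) = \<beta> * \<tau> (Suc k)" using algS by blast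
  have wS: "\<And>k. w (Suc k) = prox (1 / \<sigma> (Suc k)) g ((1 / \<sigma> (Suc k)) *\<^sub>R y k + K (x (Suc k)))" using algS by blast
  have yS: "\<And>k. y (Suc k) = y k + \<sigma> (Suc k) *\<^sub>R (K (x (Suc k)) - w (Suc k))" using algS by blast
  obtain C0 where C0: "C0 > 0" "\<And>u. norm (K u) \<le> norm u * C0"
    using bounded_linear.pos_bounded[OF linear_conv_bounded_linear[THEN iffD1, OF K]] by blast
  have Cb: "norm (K u - K v) \<le> C0 * norm (u - v)" for u v
    using C0(2)[of "u - v"] linear_diff[OF K] by (simp add: mult.commute)
  define L' where "L' = max L 1"
  have L': "L' > 0" "\<And>u v. norm (gradh u - gradh v) \<le> L' * norm (u - v)"
  proof -
    show "L' > 0" unfolding L'_def by simp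
    fix u v :: 'a
    have "L * norm (u - v) \<le> L' * norm (u - v)" unfolding L'_def by (intro mult_right_mono) auto
    then show "norm (gradh u - gradh v) \<le> L' * norm (u - v)" using h(3)[of u v] by linarith
  qed
  have mu: "\<mu> > 0" "\<mu>' > 0" using par by auto
  note TP = tau_props[OF tS _ par(1) mu C0(1) Cb L']
  define m where "m = min \<tau>0 (min (\<mu> / (sqrt \<beta> * C0)) (\<mu>' / L'))"
  have m0: "m > 0" unfolding m_def using par C0 L' mu by auto
  have tlow: "\<tau> k \<ge> m" for k
  proof (induction k)
    case 0 then show ?case using alg0 unfolding m_def by simp
  next
    case (Suc k)
    then have "\<tau> k > 0" using m0 by linarith
    then show ?case using TP(2)[of k] Suc unfolding m_def by linarith
  qed
  have tpos: "\<tau> k > 0" for k using tlow[of k] m0 by linarith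
  have tdec: "\<tau> (Suc k) \<le> \<tau> k" for k using TP(1)[OF tpos] .
  have Kst: "\<tau> (Suc k) * sqrt \<beta> * norm (K (x (Suc k)) - K (x k)) \<le> \<mu> * norm (x (Suc k) - x k)" for k
    using TP(3)[OF tpos] .
  have Gst: "\<tau> (Suc k) * norm (gradh (x (Suc k)) - gradh (x k)) \<le> \<mu>' * norm (x (Suc k) - x k)" for k
    using TP(4)[OF tpos] .
  have "decseq \<tau>" using tdec by (simp add: decseq_SucI)
  then obtain Lt where Lt: "\<tau> \<longlonglongrightarrow> Lt" using decseq_convergent[of \<tau> m] tlow by blast
  have Lt0: "Lt \<ge> m" using Lt tlow by (intro LIMSEQ_le_const) auto
  then have Ltn: "Lt \<noteq> 0" using m0 by simp
  have L1: "(\<lambda>k. \<tau> (Suc k)) \<longlonglongrightarrow> Lt" using Lt by (rule LIMSEQ_Suc)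
  have L2: "(\<lambda>k. \<tau> (Suc (Suc k))) \<longlonglongrightarrow> Lt" using L1 by (rule LIMSEQ_Suc)
  define E where "E k = \<psi> * (\<tau> (Suc k) / \<tau> k) - 2 * \<mu>' - (\<tau> (Suc k) / \<tau> (Suc (Suc k)) * \<mu>)\<^sup>2" for k
  have "E \<longlonglongrightarrow> \<psi> * (Lt / Lt) - 2 * \<mu>' - (Lt / Lt * \<mu>)\<^sup>2" unfolding E_def
    by (intro tendsto_intros L1 L2 Lt Ltn)
  then have Elim: "E \<longlonglongrightarrow> \<psi> - 2 * \<mu>' - \<mu>\<^sup>2" using Ltn by simp
  have s5: "sqrt 5 < 3"
  proof -
    have "sqrt 5 < sqrt (3\<^sup>2)" by (subst real_sqrt_less_iff) simp
    then show ?thesis by simp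
  qed
  have "\<psi> < 2" using par(3) s5 by simp
  then have "\<mu> < 1" using par(6) by simp
  then have "\<mu>\<^sup>2 < \<mu>" using mu by (simp add: power2_eq_square)
  then have "\<psi> - 2 * \<mu>' - \<mu>\<^sup>2 > 0" using par by linarith
  then have "eventually (\<lambda>k. E k > 0) sequentially" by (rule order_tendstoD(1)[OF Elim])
  then obtain N where N: "\<And>k. k \<ge> N \<Longrightarrow> E k > 0" unfolding eventually_sequentially by blast
  have psi2: "\<psi>\<^sup>2 \<le> \<psi> + 1"
  proof -
    have "\<psi> - 1/2 \<le> sqrt 5 / 2" using par by simp
    then have "(\<psi> - 1/2)\<^sup>2 \<le> (sqrt 5 / 2)\<^sup>2" using par by (intro power_mono) auto
    then show ?thesis by (simp add: power2_eq_square power_divide algebra_simps)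
  qed
  have Kxb: "K xb = wb" using sol unfolding Omega_def by simp
  obtain Fxb where Fxb: "f xb = ereal Fxb"
  proof -
    obtain s where "s \<in> subdiff f xb" using sol unfolding Omega_def by blast
    then have "f xb \<noteq> \<infinity>" "f xb \<noteq> -\<infinity>" unfolding subdiff_def by auto
    then show ?thesis using that by (cases "f xb") auto
  qed
  obtain Gwb where Gwb: "g wb = ereal Gwb"
  proof -
    have "yb \<in> subdiff g wb" using sol unfolding Omega_def by blast
    then have "g wb \<noteq> \<infinity>" "g wb \<noteq> -\<infinity>" unfolding subdiff_def by auto
    then show ?thesis using that by (cases "g wb") auto
  qed
  have lin_in: "linear (\<lambda>d. gradh u \<bullet> d)" for u
    by (simp add: bounded_linear.linear bounded_linear_inner_right)
  show ?thesis
  proof (intro allI exI[of _ "Suc N"] impI)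
    fix yy :: 'b and n :: nat
    assume n: "n \<ge> Suc N"
    then obtain k where nk: "n = Suc k" and kN: "k \<ge> N" by (cases n) auto
    have idx: "n + 1 = Suc (Suc k)" "n + 2 = Suc (Suc (Suc k))" "n - 1 = k" using nk by simp_all
    obtain Fxn where Fxn: "f (x (Suc k)) = ereal Fxn" and
      P2: "\<And>u. ereal (Fxn + ((z (Suc k) - \<tau> k *\<^sub>R adjoint K (y k) - \<tau> k *\<^sub>R gradh (x k)) - x (Suc k)) \<bullet> (u - x (Suc k)) / \<tau> k) \<le> f u"
      using prox_char[OF f tpos xS] by blast
    obtain Fxn1 where Fxn1: "f (x (Suc (Suc k))) = ereal Fxn1" and
      P1: "\<And>u. ereal (Fxn1 + ((z (Suc (Suc k)) - \<tau> (Suc k) *\<^sub>R adjoint K (y (Suc k)) - \<tau> (Suc k) *\<^sub>R gradh (x (Suc k))) - x (Suc (Suc k))) \<bullet> (u - x (Suc (Suc k))) / \<tau> (Suc k)) \<le> f u"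
      using prox_char[OF f tpos xS] by blast
    have sig: "\<sigma> (Suc k) > 0" using sS[of k] tpos[of "Suc k"] par by simp
    obtain Gwn where Gwn: "g (w (Suc k)) = ereal Gwn" and
      PG: "\<And>u. ereal (Gwn + (((1 / \<sigma> (Suc k)) *\<^sub>R y k + K (x (Suc k))) - w (Suc k)) \<bullet> (u - w (Suc k)) / (1 / \<sigma> (Suc k))) \<le> g u"
      using prox_char[OF g _ wS] sig by auto
    have F1: "Fxb \<ge> Fxn1 + (z (Suc (Suc k)) - \<tau> (Suc k) *\<^sub>R adjoint K (y (Suc k)) - \<tau> (Suc k) *\<^sub>R gradh (x (Suc k)) - x (Suc (Suc k))) \<bullet> (xb - x (Suc (Suc k))) / \<tau> (Suc k)"
      using P1[of xb] Fxb by simp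
    have F2: "Fxn1 \<ge> Fxn + (z (Suc k) - \<tau> k *\<^sub>R adjoint K (y k) - \<tau> k *\<^sub>R gradh (x k) - x (Suc k)) \<bullet> (x (Suc (Suc k)) - x (Suc k)) / \<tau> k"
      using P2[of "x (Suc (Suc k))"] Fxn1 by simp
    have gv: "(((1 / \<sigma> (Suc k)) *\<^sub>R y k + K (x (Suc k))) - w (Suc k)) \<bullet> d / (1 / \<sigma> (Suc k)) = y (Suc k) \<bullet> d" for d
    proof -
      have "(((1 / \<sigma> (Suc k)) *\<^sub>R y k + K (x (Suc k))) - w (Suc k)) \<bullet> d / (1 / \<sigma> (Suc k))
          = (\<sigma> (Suc k) *\<^sub>R (((1 / \<sigma> (Suc k)) *\<^sub>R y k + K (x (Suc k))) - w (Suc k))) \<bullet> d" by simp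
      also have "\<sigma> (Suc k) *\<^sub>R (((1 / \<sigma> (Suc k)) *\<^sub>R y k + K (x (Suc k))) - w (Suc k)) = y (Suc k)"
        unfolding yS using sig by (simp add: algebra_simps)
      finally show ?thesis .
    qed
    have Gw: "Gwb \<ge> Gwn + y (Suc k) \<bullet> (wb - w (Suc k))" using PG[of wb] Gwb gv by simp
    have H: "h xb \<ge> h (x (Suc k)) + gradh (x (Suc k)) \<bullet> (xb - x (Suc k))"
      using convex_tangent[OF h(1) h(2) lin_in] .
    have Y: "y (Suc k) = y k + (\<beta> * \<tau> (Suc k)) *\<^sub>R (K (x (Suc k)) - w (Suc k))" using yS sS by simp
    define \<kappa> where "\<kappa> = \<tau> (Suc k) / \<tau> (Suc (Suc k)) * \<mu>"
    have kap0: "\<kappa> \<ge> 0" unfolding \<kappa>_def using tpos[of "Suc k"] tpos[of "Suc (Suc k)"] mu by simp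
    have kap2: "\<kappa>\<^sup>2 \<le> \<psi> * (\<tau> (Suc k) / \<tau> k) - 2 * \<mu>'" using N[OF kN] unfolding E_def \<kappa>_def by simp
    have Kstep: "\<tau> (Suc k) * sqrt \<beta> * norm (K (x (Suc (Suc k))) - K (x (Suc k))) \<le> \<kappa> * norm (x (Suc (Suc k)) - x (Suc k))"
    proof -
      define \<rho> where "\<rho> = \<tau> (Suc k) / \<tau> (Suc (Suc k))"
      have rho: "\<rho> \<ge> 0" "\<tau> (Suc k) = \<rho> * \<tau> (Suc (Suc k))" unfolding \<rho>_def using tpos[of "Suc (Suc k)"] tpos[of "Suc k"] by auto
      have "\<tau> (Suc k) * sqrt \<beta> * norm (K (x (Suc (Suc k))) - K (x (Suc k)))
          = \<rho> * (\<tau> (Suc (Suc k)) * sqrt \<beta> * norm (K (x (Suc (Suc k))) - K (x (Suc k))))"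
        using rho(2) by simp
      also have "\<dots> \<le> \<rho> * (\<mu> * norm (x (Suc (Suc k)) - x (Suc k)))"
        using Kst[of "Suc k"] rho(1) by (intro mult_left_mono) auto
      finally show ?thesis unfolding \<kappa>_def \<rho>_def by simp
    qed
    have main: "2 * \<tau> (Suc k) * (Fxn + h (x (Suc k)) + Gwn + yy \<bullet> (K (x (Suc k)) - w (Suc k)) - Fxb - h xb - Gwb)
      + (\<psi> / (\<psi> - 1) * (norm (xb - z (Suc (Suc (Suc k)))))\<^sup>2 + 1 / \<beta> * (norm (yy - y (Suc k)))\<^sup>2 + \<mu>' * (norm (x (Suc k) - x (Suc (Suc k))))\<^sup>2)
    \<le> \<psi> / (\<psi> - 1) * (norm (xb - z (Suc (Suc k))))\<^sup>2 + 1 / \<beta> * (norm (yy - y k))\<^sup>2 + \<mu>' * (norm (x (Suc k) - x k))\<^sup>2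
      - \<psi> * (\<tau> (Suc k) / \<tau> k) * (norm (x (Suc k) - z (Suc (Suc k))))\<^sup>2"
      by (rule core[OF K F1 F2 Gw H zS zS Y Kxb tpos tpos tdec par(1) par(2) psi2 _ Gst Kstep kap0 kap2])
        (use mu in simp)
    show "ereal (2 * \<tau> n) * JJ f h K g xb wb (x n) (w n) yy
      + ereal (\<psi> / (\<psi> - 1) * (norm (xb - z (n + 2)))\<^sup>2 + 1 / \<beta> * (norm (yy - y n))\<^sup>2
               + \<mu>' * (norm (x n - x (n + 1)))\<^sup>2)
    \<le> ereal (\<psi> / (\<psi> - 1) * (norm (xb - z (n + 1)))\<^sup>2 + 1 / \<beta> * (norm (yy - y (n - 1)))\<^sup>2
               + \<mu>' * (norm (x n - x (n - 1)))\<^sup>2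
               - \<psi> * (\<tau> n / \<tau> (n - 1)) * (norm (x n - z (n + 1)))\<^sup>2)"
      unfolding idx unfolding nk JJ_def Phi_def Fxn Gwn Fxb Gwb using main by (simp add: diff_diff_eq)
  qed
qed

end
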